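(* Let $T>0$, $\lambda>0$, $C>0$, $U=[-C,C]$, and set $\rho_T:=\lambda-T$. For each $N\ge1$ and initial datum $\boldsymbol{x}^0_N\in[-1,1]^N$, let $(\boldsymbol{x}^*_N(\cdot),\boldsymbol{u}^*_N(\cdot))$ be the optimal pair of the problem: minimise $\frac{\lambda}{2N}\sum_{i=1}^N\int_0^Tu_i(t)^2dt-\frac1{2N}\sum_{i=1}^N|x_i(T)-\bar{\boldsymbol{x}}(T)|^2$ over $\boldsymbol{u}\in L^\infty([0,T],U^N)$ subject to $\dot x_i=u_i$, $x_i(0)=x^0_i$, where $\bar{\boldsymbol{x}}=\frac1N\sum_ix_i$. The following assertions are equivalent: (a) $\lambda>T$; (b) for any sequence of empirical measures $\mu^0_N=\frac1N\sum_i\delta_{x^0_i}\in\mathcal{P}_N([-1,1])$ whose supports are symmetric with respect to the origin and which converge narrowly to $\mu^0=\frac12\mathbb{1}_{[-1,1]}\mathcal{L}^1$, the associated optimal pairs satisfy $|u^*_i(t)-u^*_j(t)|\le\frac1{\rho_T}|x^*_i(t)-x^*_j(t)|$ for all $N$, all $i,j\in\{1,\dots,N\}$ and all times $t\in[0,T]$.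
   Context: Here $\mathcal{P}_N([-1,1])$ is the set of empirical measures $\frac1N\sum_{i=1}^N\delta_{x_i}$ with $x_i\in[-1,1]$, and symmetric initial data means that the configuration $(x^0_1,\dots,x^0_N)$ is invariant under $x\mapsto-x$, so that $\bar{\boldsymbol{x}}^*_N(\cdot)\equiv0$ along the optimal trajectory. The constant $\lambda-T$ is the sharp mean-field coercivity constant of this problem (the coercivity condition holds iff $\lambda>T$). *)

theory Defs
  imports "HOL-Probability.Probability"
begin

definition empirical_measure :: "nat \<Rightarrow> (nat \<Rightarrow> real) \<Rightarrow> real measure" where
  "empirical_measure N x = measure_pmf (map_pmf x (pmf_of_set {..<N}))"

definition narrowly_converges :: "(nat \<Rightarrow> real measure) \<Rightarrow> real measure \<Rightarrow> bool" where
  "narrowly_converges \<mu>s \<mu> \<longleftrightarrow>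
     (\<forall>f :: real \<Rightarrow> real. continuous_on UNIV f \<and> bounded (range f) \<longrightarrow>
        (\<lambda>n. integral\<^sup>L (\<mu>s n) f) \<longlonglongrightarrow> integral\<^sup>L \<mu> f)"

definition symmetric_config :: "nat \<Rightarrow> (nat \<Rightarrow> real) \<Rightarrow> bool" where
  "symmetric_config N x \<longleftrightarrow>
     image_mset (\<lambda>i. - x i) (mset_set {..<N}) = image_mset x (mset_set {..<N})"

definition admissible :: "real \<Rightarrow> real \<Rightarrow> nat \<Rightarrow> (nat \<Rightarrow> real \<Rightarrow> real) \<Rightarrow> bool" where
  "admissible T C N u \<longleftrightarrow>
     (\<forall>i<N. u i \<in> borel_measurable (restrict_space lborel {0..T}) \<and>
            (\<forall>t\<in>{0..T}. \<bar>u i t\<bar> \<le> C))"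

definition traj :: "(nat \<Rightarrow> real) \<Rightarrow> (nat \<Rightarrow> real \<Rightarrow> real) \<Rightarrow> nat \<Rightarrow> real \<Rightarrow> real" where
  "traj x0 u i t = x0 i + (LINT s:{0..t}|lborel. u i s)"

definition mean_traj :: "nat \<Rightarrow> (nat \<Rightarrow> real) \<Rightarrow> (nat \<Rightarrow> real \<Rightarrow> real) \<Rightarrow> real \<Rightarrow> real" where
  "mean_traj N x0 u t = (\<Sum>j<N. traj x0 u j t) / real N"

definition cost :: "real \<Rightarrow> real \<Rightarrow> nat \<Rightarrow> (nat \<Rightarrow> real) \<Rightarrow> (nat \<Rightarrow> real \<Rightarrow> real) \<Rightarrow> real" where
  "cost T lam N x0 u =
     lam / (2 * real N) * (\<Sum>i<N. (LINT t:{0..T}|lborel. (u i t)\<^sup>2))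
     - 1 / (2 * real N) * (\<Sum>i<N. (traj x0 u i T - mean_traj N x0 u T)\<^sup>2)"

(* u is an optimal control (the optimal pair is (traj x0 u, u)) *)
definition optimal_control :: "real \<Rightarrow> real \<Rightarrow> real \<Rightarrow> nat \<Rightarrow> (nat \<Rightarrow> real) \<Rightarrow> (nat \<Rightarrow> real \<Rightarrow> real) \<Rightarrow> bool" where
  "optimal_control T lam C N x0 u \<longleftrightarrow>
     admissible T C N u \<and>
     (\<forall>v. admissible T C N v \<longrightarrow> cost T lam N x0 u \<le> cost T lam N x0 v)"

end

theory Submission
  imports Defs
begin


lemma adm_meas:
  assumes "admissible T C N u" "i < N"
  shows "(\<lambda>s. indicator {0..T} s *\<^sub>R u i s) \<in> borel_measurable lborel"
proof -
  have "u i \<in> borel_measurable (restrict_space lborel {0..T})"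
    using assms unfolding admissible_def by auto
  then show ?thesis
    by (subst (asm) borel_measurable_restrict_space_iff) auto
qed

lemma adm_int:
  assumes "admissible T C N u" "i < N" "t \<le> T"
  shows "set_integrable lborel {0..t} (u i)"
    and "set_integrable lborel {0..t} (\<lambda>s. (u i s)^2)"
proof -
  let ?g = "\<lambda>s. indicator {0..T} s *\<^sub>R u i s"
  have g: "?g \<in> borel_measurable lborel" by (rule adm_meas[OF assms(1,2)])
  have bd: "\<forall>s\<in>{0..T}. \<bar>u i s\<bar> \<le> C" using assms unfolding admissible_def by auto
  have eq: "\<And>s. indicator {0..t} s *\<^sub>R ?g s = indicator {0..t} s *\<^sub>R u i s"
    using assms(3) by (auto simp: indicator_def)
  have "integrable lborel (\<lambda>s. indicator {0..t} s *\<^sub>R ?g s)"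
    apply (rule integrableI_bounded_set_indicator[where B=C])
    using g bd assms(3) by (auto simp: indicator_def emeasure_lborel_Icc_eq)
  then show "set_integrable lborel {0..t} (u i)"
    unfolding set_integrable_def eq .
  have g2: "(\<lambda>s. (?g s)^2) \<in> borel_measurable lborel" using g by measurable
  have eq2: "\<And>s. indicator {0..t} s *\<^sub>R (?g s)^2 = indicator {0..t} s *\<^sub>R (u i s)^2"
    using assms(3) by (auto simp: indicator_def)
  have sq: "\<forall>s\<in>{0..T}. (u i s)^2 \<le> C^2"
  proof
    fix s assume "s \<in> {0..T}"
    then have "\<bar>u i s\<bar> \<le> C" using bd by auto
    then have "\<bar>u i s\<bar>^2 \<le> C^2" by (intro power_mono) auto
    then show "(u i s)^2 \<le> C^2" by simp
  qed
  have "integrable lborel (\<lambda>s. indicator {0..t} s *\<^sub>R (?g s)^2)"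
    apply (rule integrableI_bounded_set_indicator[where B="C^2"])
    using g2 sq assms(3) by (auto simp: indicator_def emeasure_lborel_Icc_eq intro!: AE_I2)
  then show "set_integrable lborel {0..t} (\<lambda>s. (u i s)^2)"
    unfolding set_integrable_def eq2 .
qed

lemma lint_const: "0 \<le> t \<Longrightarrow> (LINT s:{0..t}|lborel. (c::real)) = c * t"
  by (simp add: set_lebesgue_integral_def)

definition Phi :: "real \<Rightarrow> real \<Rightarrow> nat \<Rightarrow> (nat \<Rightarrow> real) \<Rightarrow> (nat \<Rightarrow> real) \<Rightarrow> real" where
  "Phi T lam N x0 c = lam / (2 * real N) * (\<Sum>i<N. (c i)^2 * T)
     - 1 / (2 * real N) * (\<Sum>i<N. (x0 i + c i * T - (\<Sum>j<N. x0 j + c j * T) / real N)^2)"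

lemma sum2: "finite A \<Longrightarrow> i \<in> A \<Longrightarrow> j \<in> A \<Longrightarrow> i \<noteq> j \<Longrightarrow> sum f A = f i + f j + sum f (A - {i, j})"
proof -
  assume a: "finite A" "i \<in> A" "j \<in> A" "i \<noteq> j"
  have "sum f A = f i + sum f (A - {i})" using a by (simp add: sum.remove)
  also have "sum f (A - {i}) = f j + sum f (A - {i} - {j})" using a by (simp add: sum.remove)
  also have "A - {i} - {j} = A - {i, j}" by auto
  finally show ?thesis by (simp add: add.assoc)
qed
lemma sum2_upd:
  fixes f g :: "'a \<Rightarrow> 'b::ab_group_add"
  assumes "finite A" "i \<in> A" "j \<in> A" "i \<noteq> j" "\<And>k. k \<in> A - {i,j} \<Longrightarrow> f k = g k"
  shows "sum f A = sum g A + (f i - g i) + (f j - g j)"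
proof -
  have "sum f (A - {i,j}) = sum g (A - {i,j})" using assms(5) by (rule sum.cong[OF refl])
  then show ?thesis using sum2[of A i j f] sum2[of A i j g] assms(1-4) by (simp add: algebra_simps)
qed

lemma Phi_pert:
  fixes c :: "nat \<Rightarrow> real" and d :: real
  assumes ij: "i < N" "j < N" "i \<noteq> j"
  defines "c' \<equiv> c(i := c i + d, j := c j - d)"
  shows "Phi T lam N x0 c' - Phi T lam N x0 c =
     T / real N * (d * ((lam - T) * (c i - c j) - (x0 i - x0 j)) + (lam - T) * d^2)"
proof -
  let ?A = "{..<N}"
  have fin: "finite ?A" by simp
  have iA: "i \<in> ?A" "j \<in> ?A" using ij by auto
  have same: "\<And>k. k \<in> ?A - {i,j} \<Longrightarrow> c' k = c k" unfolding c'_def by auto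
  have ci: "c' i = c i + d" and cj: "c' j = c j - d" unfolding c'_def using ij by auto
  have m: "(\<Sum>k<N. x0 k + c' k * T) = (\<Sum>k<N. x0 k + c k * T)"
    by (subst sum2_upd[OF fin iA ij(3)]) (auto simp: same ci cj algebra_simps)
  define m where "m = (\<Sum>k<N. x0 k + c k * T) / real N"
  have s1: "(\<Sum>k<N. (c' k)^2 * T) = (\<Sum>k<N. (c k)^2 * T) + ((c i + d)^2 + (c j - d)^2 - (c i)^2 - (c j)^2) * T"
    by (subst sum2_upd[OF fin iA ij(3)]) (auto simp: same ci cj algebra_simps)
  have s2: "(\<Sum>k<N. (x0 k + c' k * T - m)^2) = (\<Sum>k<N. (x0 k + c k * T - m)^2)
     + ((x0 i + (c i + d) * T - m)^2 + (x0 j + (c j - d) * T - m)^2 - (x0 i + c i * T - m)^2 - (x0 j + c j * T - m)^2)"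
    by (subst sum2_upd[OF fin iA ij(3)]) (auto simp: same ci cj algebra_simps)
  have N0: "real N > 0" using ij by auto
  let ?X = "((c i + d)^2 + (c j - d)^2 - (c i)^2 - (c j)^2) * T"
  let ?Y = "(x0 i + (c i + d) * T - m)^2 + (x0 j + (c j - d) * T - m)^2 - (x0 i + c i * T - m)^2 - (x0 j + c j * T - m)^2"
  let ?Z = "d * ((lam - T) * (c i - c j) - (x0 i - x0 j)) + (lam - T) * d^2"
  have e1: "Phi T lam N x0 c' - Phi T lam N x0 c = lam / (2 * real N) * ?X - 1 / (2 * real N) * ?Y"
  proof -
    have p1: "Phi T lam N x0 c' = lam / (2 * real N) * ((\<Sum>k<N. (c k)^2 * T) + ?X) - 1 / (2 * real N) * ((\<Sum>k<N. (x0 k + c k * T - m)^2) + ?Y)"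
      unfolding Phi_def m m_def[symmetric] s1 s2 by (simp only:)
    have p2: "Phi T lam N x0 c = lam / (2 * real N) * (\<Sum>k<N. (c k)^2 * T) - 1 / (2 * real N) * (\<Sum>k<N. (x0 k + c k * T - m)^2)"
      by (simp only: Phi_def m_def)
    show ?thesis unfolding p1 p2 by (simp only: distrib_left right_diff_distrib diff_add_eq add_diff_eq diff_diff_eq)
  qed
  have e2: "lam * ?X - ?Y = 2 * T * ?Z"
    by algebra
  have "lam / (2 * real N) * ?X - 1 / (2 * real N) * ?Y = (lam * ?X - ?Y) / (2 * real N)"
    by (simp add: diff_divide_distrib)
  also have "\<dots> = T / real N * ?Z" unfolding e2 using N0 by simp
  finally show ?thesis using e1 by simp
qed

lemma pair_ineq:
  assumes opt: "\<And>c'. (\<forall>k<N. \<bar>c' k\<bar> \<le> C) \<Longrightarrow> Phi T lam N x0 c \<le> Phi T lam N x0 c'"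
    and bd: "\<forall>k<N. \<bar>c k\<bar> \<le> C" and ij: "i < N" "j < N"
    and T: "T > 0" and lT: "lam > T"
  shows "(lam - T) * (c i - c j)^2 \<le> (c i - c j) * (x0 i - x0 j)"
proof (rule ccontr)
  assume bad: "\<not> ?thesis"
  let ?D = "c i - c j" and ?e = "x0 i - x0 j" and ?r = "lam - T"
  have r: "?r > 0" using lT by simp
  have ne: "i \<noteq> j" using bad r by auto
  let ?q = "?r * ?D - ?e"
  have Dq: "?D * ?q > 0" using bad by (simp add: algebra_simps power2_eq_square)
  define eps where "eps = min \<bar>?D\<bar> (\<bar>?q\<bar> / (2 * ?r))"
  have Dn: "?D \<noteq> 0" using Dq by auto
  have qn: "?q \<noteq> 0" using Dq by auto
  have eps0: "eps > 0" unfolding eps_def using Dn qn r by auto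
  have eps1: "eps \<le> \<bar>?D\<bar>" unfolding eps_def by auto
  have eps2: "?r * eps < \<bar>?q\<bar>"
  proof -
    have "eps \<le> \<bar>?q\<bar> / (2 * ?r)" unfolding eps_def by auto
    then have "?r * eps \<le> \<bar>?q\<bar> / 2" using r by (simp add: field_simps)
    then show ?thesis using qn by auto
  qed
  define d where "d = (if ?D > 0 then - eps else eps)"
  define c' where "c' = c(i := c i + d, j := c j - d)"
  have bd': "\<forall>k<N. \<bar>c' k\<bar> \<le> C"
  proof (intro allI impI)
    fix k assume k: "k < N"
    have bi: "\<bar>c i\<bar> \<le> C" and bj: "\<bar>c j\<bar> \<le> C" using bd ij by auto
    have di: "\<bar>c i + d\<bar> \<le> C" and dj: "\<bar>c j - d\<bar> \<le> C"
    proof -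
      show "\<bar>c i + d\<bar> \<le> C"
      proof (cases "?D > 0")
        case True then show ?thesis using bi bj eps0 eps1 unfolding d_def by (simp add: abs_le_iff)
      next
        case False then show ?thesis using bi bj eps0 eps1 unfolding d_def by (simp add: abs_le_iff)
      qed
      show "\<bar>c j - d\<bar> \<le> C"
      proof (cases "?D > 0")
        case True then show ?thesis using bi bj eps0 eps1 unfolding d_def by (simp add: abs_le_iff)
      next
        case False then show ?thesis using bi bj eps0 eps1 unfolding d_def by (simp add: abs_le_iff)
      qed
    qed
    show "\<bar>c' k\<bar> \<le> C"
      using bd k di dj ne unfolding c'_def by simp
  qed
  have dq: "d * ?q = - eps * \<bar>?q\<bar>"
  proof (cases "?D > 0")
    case True
    then have "?q > 0" using Dq by (simp add: zero_less_mult_iff)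
    then show ?thesis using True unfolding d_def by simp
  next
    case False
    then have "?D < 0" using Dn by simp
    then have "?q < 0" using Dq by (simp add: zero_less_mult_iff)
    then show ?thesis using False unfolding d_def by (simp add: algebra_simps)
  qed
  have d2: "d^2 = eps^2" unfolding d_def by auto
  have neg: "d * ?q + ?r * d^2 < 0"
  proof -
    have "d * ?q + ?r * d^2 = eps * (?r * eps - \<bar>?q\<bar>)" unfolding dq d2 by (simp add: power2_eq_square algebra_simps)
    also have "\<dots> < 0" using eps0 eps2 by (simp add: mult_pos_neg)
    finally show ?thesis .
  qed
  have "Phi T lam N x0 c' - Phi T lam N x0 c = T / real N * (d * ?q + ?r * d^2)"
    unfolding c'_def by (rule Phi_pert[OF ij ne])
  also have "\<dots> < 0"
  proof -
    have "T * (d * ?q + ?r * d^2) < 0" using neg T by (simp add: mult_pos_neg)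
    moreover have "real N > 0" using ij by auto
    ultimately show ?thesis by (simp add: divide_neg_pos)
  qed
  finally have "Phi T lam N x0 c' < Phi T lam N x0 c" by simp
  with opt[OF bd'] show False by simp
qed


lemma const_int: "set_integrable lborel {0..(t::real)} (\<lambda>s. c::real)"
  unfolding set_integrable_def
  by (rule integrableI_bounded_set_indicator[where B="\<bar>c\<bar>"]) (simp_all add: emeasure_lborel_Icc_eq)

lemma adm_const: "\<forall>i<N. \<bar>c i\<bar> \<le> C \<Longrightarrow> admissible T C N (\<lambda>i t. c i)"
  unfolding admissible_def by auto

lemma cost_const: "0 \<le> T \<Longrightarrow> cost T lam N x0 (\<lambda>i t. c i) = Phi T lam N x0 c"
  unfolding cost_def traj_def mean_traj_def Phi_def by (simp add: lint_const)

lemma var_id: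
  assumes adm: "admissible T C N u" and i: "i < N" and T: "T > 0"
  defines "V \<equiv> LINT s:{0..T}|lborel. u i s"
  defines "S \<equiv> LINT s:{0..T}|lborel. (u i s)^2"
  shows "set_integrable lborel {0..T} (\<lambda>s. (u i s - V / T)^2)"
    and "(LINT s:{0..T}|lborel. (u i s - V / T)^2) = S - V^2 / T"
    and "V^2 / T \<le> S"
    and "\<bar>V\<bar> \<le> C * T"
proof -
  let ?c = "V / T"
  have i1: "set_integrable lborel {0..T} (u i)" using adm_int[OF adm i] by simp
  have i2: "set_integrable lborel {0..T} (\<lambda>s. (u i s)^2)" using adm_int[OF adm i] by simp
  have i3: "set_integrable lborel {0..T} (\<lambda>s. 2 * ?c * u i s - ?c^2)"
    by (intro set_integral_diff(1) set_integrable_mult_right i1 const_int)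
  have eq: "(\<lambda>s. (u i s - ?c)^2) = (\<lambda>s. (u i s)^2 - (2 * ?c * u i s - ?c^2))"
    by (auto simp: power2_eq_square algebra_simps)
  show int: "set_integrable lborel {0..T} (\<lambda>s. (u i s - V / T)^2)"
    unfolding eq by (intro set_integral_diff(1) i2 i3)
  have "(LINT s:{0..T}|lborel. (u i s - ?c)^2) = (LINT s:{0..T}|lborel. (u i s)^2 - (2 * ?c * u i s - ?c^2))"
    by (simp only: eq)
  also have "\<dots> = S - (LINT s:{0..T}|lborel. (2 * ?c * u i s - ?c^2))"
    unfolding S_def by (rule set_integral_diff(2)[OF i2 i3])
  also have "(LINT s:{0..T}|lborel. (2 * ?c * u i s - ?c^2)) = 2 * ?c * V - ?c^2 * T"
  proof -
    have "(LINT s:{0..T}|lborel. (2 * ?c * u i s - ?c^2)) = (LINT s:{0..T}|lborel. 2 * ?c * u i s) - (LINT s:{0..T}|lborel. ?c^2)"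
      by (rule set_integral_diff(2)[OF set_integrable_mult_right[OF i1] const_int])
    also have "\<dots> = 2 * ?c * V - ?c^2 * T"
      unfolding V_def using T by (simp add: lint_const)
    finally show ?thesis .
  qed
  also have "S - (2 * ?c * V - ?c^2 * T) = S - V^2 / T" using T by (simp add: field_simps power2_eq_square)
  finally show val: "(LINT s:{0..T}|lborel. (u i s - V / T)^2) = S - V^2 / T" .
  have "0 \<le> (LINT s:{0..T}|lborel. (u i s - V / T)^2)"
    unfolding set_lebesgue_integral_def by (rule integral_nonneg_AE) (auto simp: indicator_def)
  then show vs: "V^2 / T \<le> S" using val by simp
  have bd: "\<And>s. s \<in> {0..T} \<Longrightarrow> \<bar>u i s\<bar> \<le> C" using adm i unfolding admissible_def by auto
  have "V \<le> (LINT s:{0..T}|lborel. C)" unfolding V_def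
    by (rule set_integral_mono[OF i1 const_int]) (use bd in \<open>auto simp: abs_le_iff\<close>)
  moreover have "(LINT s:{0..T}|lborel. - C) \<le> V" unfolding V_def
    by (rule set_integral_mono[OF const_int i1]) (use bd in \<open>fastforce simp: abs_le_iff\<close>)
  ultimately show "\<bar>V\<bar> \<le> C * T" using T by (simp add: lint_const abs_le_iff)
qed

lemma final_alg:
  fixes r D e t :: real
  assumes r: "r > 0" and h: "r * D^2 \<le> D * e" and t: "0 \<le> t"
  shows "\<bar>D\<bar> \<le> 1 / r * \<bar>e + t * D\<bar>"
proof (cases "D = 0")
  case True then show ?thesis using r by simp
next
  case False
  have pos: "D * e > 0" using h r False by (smt (verit) mult_pos_pos zero_less_power2)
  have a1: "\<bar>e\<bar> \<le> \<bar>e + t * D\<bar>"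
  proof (cases "D > 0")
    case True then have "e > 0" using pos by (simp add: zero_less_mult_iff)
    then show ?thesis using True t by simp
  next
    case f: False then have "D < 0" using False by simp
    then have "e < 0" using pos by (simp add: zero_less_mult_iff)
    then show ?thesis using \<open>D < 0\<close> t by (smt (verit) mult_nonneg_nonpos)
  qed
  have "r * \<bar>D\<bar> * \<bar>D\<bar> \<le> \<bar>e\<bar> * \<bar>D\<bar>"
  proof -
    have "r * \<bar>D\<bar> * \<bar>D\<bar> = r * D^2" by (simp add: power2_eq_square abs_mult_self_eq)
    also have "\<dots> \<le> D * e" by (rule h)
    also have "\<dots> \<le> \<bar>e\<bar> * \<bar>D\<bar>" by (simp add: abs_mult[symmetric] mult.commute)
    finally show ?thesis .
  qed
  then have "r * \<bar>D\<bar> \<le> \<bar>e\<bar>" using False by simp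
  then have "\<bar>D\<bar> \<le> \<bar>e\<bar> / r" using r by (simp add: field_simps)
  also have "\<dots> \<le> \<bar>e + t * D\<bar> / r" using a1 r by (simp add: divide_right_mono)
  finally show ?thesis by simp
qed

lemma fwd:
  assumes T: "T > 0" and lT: "lam > T" and N: "N \<ge> 1" and opt: "optimal_control T lam C N x0 u"
  shows "AE t in lborel. t \<in> {0..T} \<longrightarrow> (\<forall>i<N. \<forall>j<N. \<bar>u i t - u j t\<bar> \<le>
                 1 / (lam - T) * \<bar>traj x0 u i t - traj x0 u j t\<bar>)"
proof -
  have adm: "admissible T C N u" using opt unfolding optimal_control_def by simp
  have optv: "\<And>v. admissible T C N v \<Longrightarrow> cost T lam N x0 u \<le> cost T lam N x0 v"
    using opt unfolding optimal_control_def by simp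
  define V where "V i = (LINT s:{0..T}|lborel. u i s)" for i
  define S where "S i = (LINT s:{0..T}|lborel. (u i s)^2)" for i
  define c where "c i = V i / T" for i
  have vid: "\<And>i. i < N \<Longrightarrow> set_integrable lborel {0..T} (\<lambda>s. (u i s - c i)^2)
       \<and> (LINT s:{0..T}|lborel. (u i s - c i)^2) = S i - (V i)^2 / T
       \<and> (V i)^2 / T \<le> S i \<and> \<bar>V i\<bar> \<le> C * T"
    unfolding c_def V_def S_def using var_id[OF adm _ T] by blast
  have cb: "\<forall>i<N. \<bar>c i\<bar> \<le> C"
  proof (intro allI impI)
    fix i assume "i < N"
    then have "\<bar>V i\<bar> \<le> C * T" using vid by blast
    then show "\<bar>c i\<bar> \<le> C" unfolding c_def using T by (simp add: field_simps)
  qed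
  define M where "M = (\<Sum>j<N. x0 j + V j) / real N"
  define Q where "Q = (\<Sum>i<N. (x0 i + V i - M)^2)"
  have cu: "cost T lam N x0 u = lam / (2 * real N) * (\<Sum>i<N. S i) - 1 / (2 * real N) * Q"
    unfolding cost_def traj_def mean_traj_def S_def Q_def M_def V_def by simp
  have cT: "\<And>i. c i * T = V i" unfolding c_def using T by simp
  have c2T: "\<And>i. (c i)^2 * T = (V i)^2 / T" unfolding c_def using T by (simp add: power2_eq_square)
  have cw: "cost T lam N x0 (\<lambda>i t. c i) = lam / (2 * real N) * (\<Sum>i<N. (V i)^2 / T) - 1 / (2 * real N) * Q"
    using T by (simp add: cost_const Phi_def cT c2T Q_def M_def)
  have "cost T lam N x0 u \<le> cost T lam N x0 (\<lambda>i t. c i)" by (rule optv[OF adm_const[OF cb]])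
  then have "lam / (2 * real N) * (\<Sum>i<N. S i) \<le> lam / (2 * real N) * (\<Sum>i<N. (V i)^2 / T)"
    unfolding cu cw by simp
  moreover have "lam / (2 * real N) > 0" using lT T N by simp
  ultimately have le: "(\<Sum>i<N. S i) \<le> (\<Sum>i<N. (V i)^2 / T)" by (rule mult_left_le_imp_le)
  have ge: "\<And>i. i \<in> {..<N} \<Longrightarrow> (V i)^2 / T \<le> S i" using vid by blast
  have "(\<Sum>i<N. S i - (V i)^2 / T) = 0"
  proof -
    have "(\<Sum>i<N. S i - (V i)^2 / T) \<le> 0" using le by (simp add: sum_subtractf)
    moreover have "(\<Sum>i<N. S i - (V i)^2 / T) \<ge> 0" using ge by (intro sum_nonneg) simp
    ultimately show ?thesis by simp
  qed
  then have SV: "\<And>i. i < N \<Longrightarrow> S i = (V i)^2 / T"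
    using ge by (subst (asm) sum_nonneg_eq_0_iff) auto
  have cost_eq: "cost T lam N x0 u = Phi T lam N x0 c"
  proof -
    have "(\<Sum>i<N. S i) = (\<Sum>i<N. (V i)^2 / T)" using SV by simp
    then show ?thesis using cu cw cost_const[of T lam N x0 c] T by simp
  qed
  have optc: "\<And>c'. (\<forall>k<N. \<bar>c' k\<bar> \<le> C) \<Longrightarrow> Phi T lam N x0 c \<le> Phi T lam N x0 c'"
    using optv[OF adm_const] cost_const[of T lam N x0] T cost_eq by auto
  have pair: "\<And>i j. i < N \<Longrightarrow> j < N \<Longrightarrow> (lam - T) * (c i - c j)^2 \<le> (c i - c j) * (x0 i - x0 j)"
    by (rule pair_ineq[OF optc cb _ _ T lT])
  have ae1: "\<And>i. i < N \<Longrightarrow> AE s in lborel. s \<in> {0..T} \<longrightarrow> u i s = c i"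
  proof -
    fix i assume i: "i < N"
    have int: "integrable lborel (\<lambda>s. indicator {0..T} s * (u i s - c i)^2)"
      using vid[OF i] unfolding set_integrable_def by simp
    have "integral\<^sup>L lborel (\<lambda>s. indicator {0..T} s * (u i s - c i)^2) = 0"
      using vid[OF i] SV[OF i] unfolding set_lebesgue_integral_def by simp
    then have "AE s in lborel. indicator {0..T} s * (u i s - c i)^2 = 0"
      using integral_nonneg_eq_0_iff_AE[OF int] by simp
    then show "AE s in lborel. s \<in> {0..T} \<longrightarrow> u i s = c i"
      by eventually_elim (auto simp: indicator_def)
  qed
  have ae: "AE s in lborel. \<forall>i\<in>{..<N}. s \<in> {0..T} \<longrightarrow> u i s = c i"
    using ae1 by (intro eventually_ball_finite) auto
  have traj_eq: "\<And>i t. i < N \<Longrightarrow> t \<in> {0..T} \<Longrightarrow> traj x0 u i t = x0 i + c i * t"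
  proof -
    fix i t assume i: "i < N" and t: "t \<in> {0..T}"
    let ?g = "\<lambda>s. indicator {0..T} s *\<^sub>R u i s"
    have g: "?g \<in> borel_measurable lborel" by (rule adm_meas[OF adm i])
    have "(LINT s:{0..t}|lborel. u i s) = integral\<^sup>L lborel (\<lambda>s. indicator {0..t} s *\<^sub>R ?g s)"
    proof -
      have "(\<lambda>s. indicator {0..t} s *\<^sub>R u i s) = (\<lambda>s. indicator {0..t} s *\<^sub>R ?g s)"
        using t by (auto simp: indicator_def fun_eq_iff)
      then show ?thesis unfolding set_lebesgue_integral_def by simp
    qed
    also have "\<dots> = integral\<^sup>L lborel (\<lambda>s. indicator {0..t} s *\<^sub>R c i)"
    proof (rule integral_cong_AE)
      show "(\<lambda>s. indicator {0..t} s *\<^sub>R ?g s) \<in> borel_measurable lborel" using g by measurable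
      show "(\<lambda>s. indicator {0..t} s *\<^sub>R c i) \<in> borel_measurable lborel" by measurable
      show "AE s in lborel. indicator {0..t} s *\<^sub>R ?g s = indicator {0..t} s *\<^sub>R c i"
        using ae1[OF i] by eventually_elim (use t in \<open>auto simp: indicator_def\<close>)
    qed
    also have "\<dots> = c i * t" using lint_const[of t "c i"] t unfolding set_lebesgue_integral_def by simp
    finally show "traj x0 u i t = x0 i + c i * t" unfolding traj_def by simp
  qed
  show ?thesis
    using ae
  proof eventually_elim
    case (elim s)
    show ?case
    proof (intro impI allI)
      fix i j assume s: "s \<in> {0..T}" and i: "i < N" and j: "j < N"
      have "\<bar>c i - c j\<bar> \<le> 1 / (lam - T) * \<bar>(x0 i - x0 j) + s * (c i - c j)\<bar>"
        using final_alg[OF _ pair[OF i j]] lT s by simp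
      moreover have "u i s = c i" "u j s = c j" using elim s i j by auto
      moreover have "traj x0 u i s - traj x0 u j s = (x0 i - x0 j) + s * (c i - c j)"
        using traj_eq[OF i s] traj_eq[OF j s] by (simp add: algebra_simps)
      ultimately show "\<bar>u i s - u j s\<bar> \<le> 1 / (lam - T) * \<bar>traj x0 u i s - traj x0 u j s\<bar>" by simp
    qed
  qed
qed

lemma alg2:
  fixes lam T K a b :: real
  assumes T: "T > 0" and l: "0 < lam" "lam \<le> T" and a: "\<bar>a\<bar> \<le> K" and b: "\<bar>b\<bar> \<le> K"
  shows "4 * lam * K^2 - T * (2 * K + 1)^2 \<le> 2 * lam * (a^2 + b^2) - T * (a + b + 1)^2"
proof -
  define s where "s = a + b"
  define q where "q = 2 * K"
  have s1: "s \<le> q" and s2: "- q \<le> s" using a b unfolding s_def q_def by (auto simp: abs_le_iff)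
  have sq: "s^2 \<le> 2 * (a^2 + b^2)" unfolding s_def using sum_squares_ge_zero[of "a - b" 0]
    by (simp add: power2_eq_square algebra_simps)
  have f1: "lam * (s + q) \<le> T * (s + q)" using l s2 by (intro mult_right_mono) auto
  have br: "lam * (s + q) - T * (s + q + 2) < 0" using f1 T by (simp add: algebra_simps)
  have prod: "0 \<le> (s - q) * (lam * (s + q) - T * (s + q + 2))"
    using s1 br by (intro mult_nonpos_nonpos) auto
  have id: "(s - q) * (lam * (s + q) - T * (s + q + 2)) = (lam * s^2 - T * (s+1)^2) - (lam * q^2 - T * (q + 1)^2)"
    by (simp add: power2_eq_square algebra_simps)
  have "4 * lam * K^2 - T * (2 * K + 1)^2 = lam * q^2 - T * (q + 1)^2" unfolding q_def by (simp add: power2_eq_square algebra_simps)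
  also have "\<dots> \<le> lam * s^2 - T * (s+1)^2" using prod id by simp
  also have "\<dots> \<le> 2 * lam * (a^2 + b^2) - T * (a + b + 1)^2"
    using sq l unfolding s_def by (simp add: mult_left_mono)
  finally show ?thesis .
qed

lemma sum_lt2: "(\<Sum>i<(2::nat). f i) = f 0 + f 1"
  by (simp add: numeral_2_eq_2)

lemma bwd_N2:
  assumes T: "T > 0" and l: "lam > 0" "lam \<le> T" and C: "C > 0"
    and x0: "x0 0 = - 1/2" "x0 1 = 1/2"
  shows "\<not> (\<forall>u. optimal_control T lam C 2 x0 u \<longrightarrow>
          (AE t in lborel. t \<in> {0..T} \<longrightarrow>
             (\<forall>i<2. \<forall>j<2. \<bar>u i t - u j t\<bar> \<le>
                 1 / (lam - T) * \<bar>traj x0 u i t - traj x0 u j t\<bar>)))"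
proof
  define c :: "nat \<Rightarrow> real" where "c i = (if i = 0 then - C else C)" for i
  define u where "u = (\<lambda>i (t::real). c i)"
  assume H: "\<forall>u. optimal_control T lam C 2 x0 u \<longrightarrow>
          (AE t in lborel. t \<in> {0..T} \<longrightarrow>
             (\<forall>i<2. \<forall>j<2. \<bar>u i t - u j t\<bar> \<le>
                 1 / (lam - T) * \<bar>traj x0 u i t - traj x0 u j t\<bar>))"
  have x1: "x0 (Suc 0) = 1/2" using x0 by simp
  have cb: "\<forall>i<2. \<bar>c i\<bar> \<le> C" unfolding c_def using C by auto
  have admu: "admissible T C 2 u" unfolding u_def by (rule adm_const[OF cb])
  have costu: "cost T lam 2 x0 u = (4 * lam * (C*T)^2 - T * (2 * (C*T) + 1)^2) / (8 * T)"
    unfolding u_def using T by (simp add: cost_const Phi_def sum_lt2 c_def x0 x1 field_simps power2_eq_square)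
  have optu: "optimal_control T lam C 2 x0 u"
    unfolding optimal_control_def
  proof (intro conjI admu allI impI)
    fix v assume admv: "admissible T C 2 v"
    define V where "V i = (LINT s:{0..T}|lborel. v i s)" for i
    define S where "S i = (LINT s:{0..T}|lborel. (v i s)^2)" for i
    have v0: "(V 0)^2 / T \<le> S 0" "\<bar>V 0\<bar> \<le> C * T"
      unfolding V_def S_def using var_id[OF admv _ T, of 0] by auto
    have v1: "(V 1)^2 / T \<le> S 1" "\<bar>V 1\<bar> \<le> C * T"
      unfolding V_def S_def using var_id[OF admv _ T, of 1] by auto
    have cv: "cost T lam 2 x0 v = lam / 4 * (S 0 + S 1) - ((- V 0) + V 1 + 1)^2 / 8"
      unfolding cost_def traj_def mean_traj_def S_def V_def
      by (simp add: sum_lt2 x0 x1 field_simps power2_eq_square)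
    have a2: "4 * lam * (C*T)^2 - T * (2 * (C*T) + 1)^2 \<le> 2 * lam * ((- V 0)^2 + (V 1)^2) - T * ((- V 0) + V 1 + 1)^2"
      by (rule alg2[OF T l]) (use v0 v1 in auto)
    have "lam * ((V 0)^2 / T) \<le> lam * S 0" using v0 l by (intro mult_left_mono) auto
    moreover have "lam * ((V 1)^2 / T) \<le> lam * S 1" using v1 l by (intro mult_left_mono) auto
    ultimately have b0: "lam * ((V 0)^2 / T) + lam * ((V 1)^2 / T) \<le> lam * S 0 + lam * S 1" by linarith
    have e4: "\<And>x y. lam / 4 * (x + y) = (lam * x + lam * y) / 4" by (simp add: algebra_simps)
    have b: "lam / 4 * ((V 0)^2 / T + (V 1)^2 / T) \<le> lam / 4 * (S 0 + S 1)"
      unfolding e4 using b0 by (intro divide_right_mono) auto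
    have "cost T lam 2 x0 u \<le> lam / 4 * ((V 0)^2 / T + (V 1)^2 / T) - ((- V 0) + V 1 + 1)^2 / 8"
    proof -
      have "(2 * lam * ((- V 0)^2 + (V 1)^2) - T * ((- V 0) + V 1 + 1)^2) / (8 * T)
          = lam / 4 * ((V 0)^2 / T + (V 1)^2 / T) - ((- V 0) + V 1 + 1)^2 / 8"
        using T by (simp add: field_simps)
      moreover have "(4 * lam * (C*T)^2 - T * (2 * (C*T) + 1)^2) / (8 * T) \<le>
          (2 * lam * ((- V 0)^2 + (V 1)^2) - T * ((- V 0) + V 1 + 1)^2) / (8 * T)"
        using a2 T by (intro divide_right_mono) auto
      ultimately show ?thesis unfolding costu by simp
    qed
    then show "cost T lam 2 x0 u \<le> cost T lam 2 x0 v" unfolding cv using b by linarith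
  qed
  have ae: "AE t in lborel. t \<in> {0..T} \<longrightarrow>
             (\<forall>i<2. \<forall>j<2. \<bar>u i t - u j t\<bar> \<le>
                 1 / (lam - T) * \<bar>traj x0 u i t - traj x0 u j t\<bar>)"
    using H optu by blast
  have "AE t in lborel. t \<notin> {0..T}"
    using ae
  proof eventually_elim
    case (elim t)
    show ?case
    proof
      assume t: "t \<in> {0..T}"
      then have "\<bar>u 0 t - u 1 t\<bar> \<le> 1 / (lam - T) * \<bar>traj x0 u 0 t - traj x0 u 1 t\<bar>"
        using elim by auto
      moreover have "\<bar>u 0 t - u 1 t\<bar> = 2 * C" unfolding u_def c_def using C by simp
      moreover have "1 / (lam - T) \<le> 0" using l by simp
      ultimately have "2 * C \<le> 0"
        by (smt (verit) abs_ge_zero mult_nonpos_nonneg)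
      then show False using C by simp
    qed
  qed
  then have "emeasure lborel {0..T} = 0"
    by (subst (asm) AE_iff_measurable[where N="{0..T}"]) auto
  then show False using T by simp
qed



definition xs :: "nat \<Rightarrow> nat \<Rightarrow> real" where
  "xs N i = (2 * real i + 1 - real N) / real N"

lemma xs_range: "N \<ge> 1 \<Longrightarrow> i < N \<Longrightarrow> xs N i \<in> {-1..1}"
  unfolding xs_def by (auto simp: field_simps)

lemma xs_sym: "symmetric_config N (xs N)"
proof -
  let ?A = "{..<N}" and ?h = "\<lambda>i. N - 1 - i"
  have inj: "inj_on ?h ?A" by (auto simp: inj_on_def)
  have img: "?h ` ?A = ?A"
  proof
    show "?h ` ?A \<subseteq> ?A" by auto
    show "?A \<subseteq> ?h ` ?A"
    proof
      fix i assume "i \<in> ?A"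
      then have "i = ?h (?h i)" "?h i \<in> ?A" by auto
      then show "i \<in> ?h ` ?A" by blast
    qed
  qed
  have "image_mset (\<lambda>i. - xs N i) (mset_set ?A) = image_mset (xs N \<circ> ?h) (mset_set ?A)"
  proof (rule image_mset_cong)
    fix i assume "i \<in># mset_set ?A"
    then have i: "i < N" by simp
    then have "real (N - 1 - i) = real N - 1 - real i" by (simp add: of_nat_diff)
    then show "- xs N i = (xs N \<circ> ?h) i" unfolding xs_def by (simp add: field_simps)
  qed
  also have "\<dots> = image_mset (xs N) (image_mset ?h (mset_set ?A))" by (simp add: multiset.map_comp)
  also have "\<dots> = image_mset (xs N) (mset_set ?A)" by (subst image_mset_mset_set[OF inj]) (simp only: img)
  finally show ?thesis unfolding symmetric_config_def .
qed



lemma xs_set: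
  assumes N: "N \<ge> 1"
  shows "{..<N} \<inter> xs N -` {..x} = {..< min N (nat \<lfloor>real N * (x+1)/2 + 1/2\<rfloor>)}"
proof -
  let ?a = "real N * (x+1)/2 + 1/2"
  have eq: "xs N i \<le> x \<longleftrightarrow> i < nat \<lfloor>?a\<rfloor>" for i
  proof -
    have e1: "xs N i \<le> x \<longleftrightarrow> real (i + 1) \<le> ?a"
      using N unfolding xs_def by (simp add: field_simps)
    have e2: "real (i + 1) \<le> ?a \<longleftrightarrow> int (i + 1) \<le> \<lfloor>?a\<rfloor>"
      by (simp only: le_floor_iff of_int_of_nat_eq)
    have e3: "int (i + 1) \<le> \<lfloor>?a\<rfloor> \<longleftrightarrow> i < nat \<lfloor>?a\<rfloor>" by linarith
    show ?thesis using e1 e2 e3 by simp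
  qed
  show ?thesis
  proof (rule set_eqI)
    fix i
    have "i \<in> {..<N} \<inter> xs N -` {..x} \<longleftrightarrow> i < N \<and> i < nat \<lfloor>?a\<rfloor>"
      using eq[of i] by simp
    also have "\<dots> \<longleftrightarrow> i \<in> {..< min N (nat \<lfloor>?a\<rfloor>)}" by simp
    finally show "i \<in> {..<N} \<inter> xs N -` {..x} \<longleftrightarrow> i \<in> {..< min N (nat \<lfloor>?a\<rfloor>)}" .
  qed
qed

lemma min_div_aux: "(n::real) > 0 \<Longrightarrow> min n (max 0 k) / n = min 1 (max 0 (k / n))"
  by (cases "k \<le> 0"; cases "k \<le> n") (auto simp: min_def max_def divide_le_eq le_divide_eq)

lemma min_nat_aux: "real (min N (nat k)) = min (real N) (max 0 (real_of_int k))"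
proof (cases "k \<le> 0")
  case True then show ?thesis by (simp add: min_def max_def)
next
  case False
  then obtain n where "k = int n" using nonneg_int_cases[of k] by force
  then show ?thesis by (simp add: min_def max_def)
qed

lemma cdf_emp:
  assumes N: "N \<ge> 1"
  shows "measure (empirical_measure N (xs N)) {..x} = min 1 (max 0 (real_of_int \<lfloor>real N * (x+1)/2 + 1/2\<rfloor> / real N))"
proof -
  let ?k = "\<lfloor>real N * (x+1)/2 + 1/2\<rfloor>"
  have ne: "{..<N} \<noteq> {}" proof - have "0 \<in> {..<N}" using N by simp then show ?thesis by blast qed
  have "measure (empirical_measure N (xs N)) {..x} = real (card ({..<N} \<inter> xs N -` {..x})) / real N"
    unfolding empirical_measure_def using ne by (simp add: measure_pmf_of_set)
  also have "\<dots> = real (min N (nat ?k)) / real N" using xs_set[OF N] by simp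
  also have "\<dots> = min 1 (max 0 (real_of_int ?k / real N))"
  proof -
    have Np: "real N > 0" using N by simp
    have "real (min N (nat ?k)) = min (real N) (max 0 (real_of_int ?k))"
      by (rule min_nat_aux)
    also have "\<dots> / real N = min 1 (max 0 (real_of_int ?k / real N))"
      using Np by (rule min_div_aux)
    finally show ?thesis by simp
  qed
  finally show ?thesis .
qed

lemma floor_lim: "(\<lambda>N. real_of_int \<lfloor>real N * (x+1)/2 + 1/2\<rfloor> / real N) \<longlonglongrightarrow> (x+1)/2"
proof (rule tendsto_sandwich)
  let ?a = "\<lambda>N::nat. real N * (x+1)/2 + 1/2"
  show "\<forall>\<^sub>F N in sequentially. (x+1)/2 - 1/(2 * real N) \<le> real_of_int \<lfloor>?a N\<rfloor> / real N"
  proof (rule eventually_sequentiallyI[of 1])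
    fix N :: nat assume "N \<ge> 1"
    then have N: "real N > 0" by simp
    have "?a N - 1 \<le> real_of_int \<lfloor>?a N\<rfloor>" by linarith
    then have "(?a N - 1) / real N \<le> real_of_int \<lfloor>?a N\<rfloor> / real N" using N by (simp add: divide_right_mono)
    moreover have "(?a N - 1) / real N = (x+1)/2 - 1/(2 * real N)" using N by (simp add: field_simps)
    ultimately show "(x+1)/2 - 1/(2 * real N) \<le> real_of_int \<lfloor>?a N\<rfloor> / real N" by simp
  qed
  show "\<forall>\<^sub>F N in sequentially. real_of_int \<lfloor>?a N\<rfloor> / real N \<le> (x+1)/2 + 1/(2 * real N)"
  proof (rule eventually_sequentiallyI[of 1])
    fix N :: nat assume "N \<ge> 1"
    then have N: "real N > 0" by simp
    have "real_of_int \<lfloor>?a N\<rfloor> \<le> ?a N" by linarith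
    then have "real_of_int \<lfloor>?a N\<rfloor> / real N \<le> ?a N / real N" using N by (simp add: divide_right_mono)
    moreover have "?a N / real N = (x+1)/2 + 1/(2 * real N)" using N by (simp add: field_simps)
    ultimately show "real_of_int \<lfloor>?a N\<rfloor> / real N \<le> (x+1)/2 + 1/(2 * real N)" by simp
  qed
  have z: "(\<lambda>N. 1 / (2 * real N)) \<longlonglongrightarrow> 0"
    using tendsto_mult_left[OF lim_inverse_n', of "1/2"] by (simp add: field_simps)
  show "(\<lambda>N. (x+1)/2 - 1/(2 * real N)) \<longlonglongrightarrow> (x+1)/2" using tendsto_diff[OF tendsto_const z] by simp
  show "(\<lambda>N. (x+1)/2 + 1/(2 * real N)) \<longlonglongrightarrow> (x+1)/2" using tendsto_add[OF tendsto_const z] by simp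
qed

lemma cdf_unif: "measure (uniform_measure lborel {-1..1::real}) {..x} = min 1 (max 0 ((x+1)/2))"
proof -
  have "measure (uniform_measure lborel {-1..1::real}) {..x} = measure lborel ({-1..1} \<inter> {..x}) / measure lborel {-1..1::real}"
    by (rule measure_uniform_measure) auto
  also have "{-1..1} \<inter> {..x} = {-1..min 1 x}" by auto
  finally show ?thesis by (auto simp: min_def max_def)
qed


lemma xs_narrow: "narrowly_converges (\<lambda>N. empirical_measure N (xs N)) (uniform_measure lborel {-1..1})"
proof -
  define \<mu> where "\<mu> N = distr (empirical_measure N (xs N)) borel (\<lambda>x. x)" for N
  define M where "M = uniform_measure lborel {-1..1::real}"
  have meas: "\<And>N. (\<lambda>x. x) \<in> measurable (empirical_measure N (xs N)) borel"
    unfolding empirical_measure_def by simp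
  have \<mu>d: "\<And>N. real_distribution (\<mu> N)"
  proof -
    fix N
    interpret P: prob_space "empirical_measure N (xs N)"
      unfolding empirical_measure_def by (rule measure_pmf.prob_space_axioms)
    show "real_distribution (\<mu> N)" unfolding \<mu>_def
      by (rule P.real_distribution_distr) (use meas in simp)
  qed
  have Md: "real_distribution M"
    unfolding real_distribution_def real_distribution_axioms_def M_def
    by (auto intro!: prob_space_uniform_measure)
  have weak: "weak_conv_m \<mu> M"
    unfolding weak_conv_m_def weak_conv_def
  proof (intro allI impI)
    fix x :: real
    have ev: "\<forall>\<^sub>F N in sequentially. min 1 (max 0 (real_of_int \<lfloor>real N * (x+1)/2 + 1/2\<rfloor> / real N)) = cdf (\<mu> N) x"
    proof (rule eventually_sequentiallyI[of 1])
      fix N :: nat assume N: "N \<ge> 1"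
      have "cdf (\<mu> N) x = measure (empirical_measure N (xs N)) {..x}"
        unfolding cdf_def \<mu>_def using meas[of N] by (simp add: measure_distr empirical_measure_def)
      then show "min 1 (max 0 (real_of_int \<lfloor>real N * (x+1)/2 + 1/2\<rfloor> / real N)) = cdf (\<mu> N) x"
        using cdf_emp[OF N] by simp
    qed
    have lim: "(\<lambda>N. min 1 (max 0 (real_of_int \<lfloor>real N * (x+1)/2 + 1/2\<rfloor> / real N))) \<longlonglongrightarrow> min 1 (max 0 ((x+1)/2))"
      by (intro tendsto_min tendsto_max tendsto_const floor_lim)
    have "cdf M x = min 1 (max 0 ((x+1)/2))" unfolding cdf_def M_def by (rule cdf_unif)
    then show "(\<lambda>N. cdf (\<mu> N) x) \<longlonglongrightarrow> cdf M x"
      using Lim_transform_eventually[OF lim ev] by simp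
  qed
  show ?thesis
    unfolding narrowly_converges_def
  proof (intro allI impI)
    fix f :: "real \<Rightarrow> real"
    assume fa: "continuous_on UNIV f \<and> bounded (range f)"
    then obtain B where B: "\<And>x. norm (f x) \<le> B" unfolding bounded_iff by auto
    have cont: "\<And>x. isCont f x" using fa continuous_on_eq_continuous_at[OF open_UNIV] by auto
    have fm: "f \<in> borel_measurable borel" using fa by (intro borel_measurable_continuous_onI) auto
    have eq: "\<And>N. integral\<^sup>L (\<mu> N) f = integral\<^sup>L (empirical_measure N (xs N)) f"
      unfolding \<mu>_def by (rule integral_distr[OF meas fm])
    have "(\<lambda>N. integral\<^sup>L (\<mu> N) f) \<longlonglongrightarrow> integral\<^sup>L M f"
      by (rule weak_conv_imp_integral_bdd_continuous_conv[OF \<mu>d Md weak cont B])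
    then show "(\<lambda>N. integral\<^sup>L (empirical_measure N (xs N)) f) \<longlonglongrightarrow> integral\<^sup>L (uniform_measure lborel {-1..1}) f"
      unfolding eq M_def .
  qed
qed


theorem proposition6p3:
  fixes T lam C :: real
  assumes "T > 0" and "lam > 0" and "C > 0"
  shows "lam > T \<longleftrightarrow>
    (\<forall>x0 :: nat \<Rightarrow> nat \<Rightarrow> real.
       (\<forall>N\<ge>1. \<forall>i<N. x0 N i \<in> {-1..1}) \<and>
       (\<forall>N\<ge>1. symmetric_config N (x0 N)) \<and>
       narrowly_converges (\<lambda>N. empirical_measure N (x0 N)) (uniform_measure lborel {-1..1})
       \<longrightarrow>
       (\<forall>N\<ge>1. \<forall>u. optimal_control T lam C N (x0 N) u \<longrightarrow>
          (AE t in lborel. t \<in> {0..T} \<longrightarrow>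
             (\<forall>i<N. \<forall>j<N. \<bar>u i t - u j t\<bar> \<le>
                 1 / (lam - T) * \<bar>traj (x0 N) u i t - traj (x0 N) u j t\<bar>))))"
proof
  assume lT: "lam > T"
  show "\<forall>x0 :: nat \<Rightarrow> nat \<Rightarrow> real.
       (\<forall>N\<ge>1. \<forall>i<N. x0 N i \<in> {-1..1}) \<and>
       (\<forall>N\<ge>1. symmetric_config N (x0 N)) \<and>
       narrowly_converges (\<lambda>N. empirical_measure N (x0 N)) (uniform_measure lborel {-1..1})
       \<longrightarrow>
       (\<forall>N\<ge>1. \<forall>u. optimal_control T lam C N (x0 N) u \<longrightarrow>
          (AE t in lborel. t \<in> {0..T} \<longrightarrow>
             (\<forall>i<N. \<forall>j<N. \<bar>u i t - u j t\<bar> \<le>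
                 1 / (lam - T) * \<bar>traj (x0 N) u i t - traj (x0 N) u j t\<bar>)))"
  proof (intro allI impI)
    fix x0 :: "nat \<Rightarrow> nat \<Rightarrow> real" and N :: nat and u
    assume N: "N \<ge> 1" and opt: "optimal_control T lam C N (x0 N) u"
    show "AE t in lborel. t \<in> {0..T} \<longrightarrow>
             (\<forall>i<N. \<forall>j<N. \<bar>u i t - u j t\<bar> \<le>
                 1 / (lam - T) * \<bar>traj (x0 N) u i t - traj (x0 N) u j t\<bar>)"
      by (rule fwd[OF assms(1) lT N opt])
  qed
next
  assume H: "\<forall>x0 :: nat \<Rightarrow> nat \<Rightarrow> real.
       (\<forall>N\<ge>1. \<forall>i<N. x0 N i \<in> {-1..1}) \<and>
       (\<forall>N\<ge>1. symmetric_config N (x0 N)) \<and>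
       narrowly_converges (\<lambda>N. empirical_measure N (x0 N)) (uniform_measure lborel {-1..1})
       \<longrightarrow>
       (\<forall>N\<ge>1. \<forall>u. optimal_control T lam C N (x0 N) u \<longrightarrow>
          (AE t in lborel. t \<in> {0..T} \<longrightarrow>
             (\<forall>i<N. \<forall>j<N. \<bar>u i t - u j t\<bar> \<le>
                 1 / (lam - T) * \<bar>traj (x0 N) u i t - traj (x0 N) u j t\<bar>)))"
  show "lam > T"
  proof (rule ccontr)
    assume "\<not> lam > T"
    then have le: "lam \<le> T" by simp
    have c1: "\<forall>N\<ge>1. \<forall>i<N. xs N i \<in> {-1..1}" using xs_range by blast
    have c2: "\<forall>N\<ge>1. symmetric_config N (xs N)" using xs_sym by blast
    have c3: "narrowly_converges (\<lambda>N. empirical_measure N (xs N)) (uniform_measure lborel {-1..1})"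
      by (rule xs_narrow)
    have B: "\<forall>N\<ge>1. \<forall>u. optimal_control T lam C N (xs N) u \<longrightarrow>
          (AE t in lborel. t \<in> {0..T} \<longrightarrow>
             (\<forall>i<N. \<forall>j<N. \<bar>u i t - u j t\<bar> \<le>
                 1 / (lam - T) * \<bar>traj (xs N) u i t - traj (xs N) u j t\<bar>))"
      using mp[OF spec[OF H, of xs] conjI[OF c1 conjI[OF c2 c3]]] .
    have two: "(2::nat) \<ge> 1" by simp
    have P2: "\<forall>u. optimal_control T lam C 2 (xs 2) u \<longrightarrow>
          (AE t in lborel. t \<in> {0..T} \<longrightarrow>
             (\<forall>i<2. \<forall>j<2. \<bar>u i t - u j t\<bar> \<le>
                 1 / (lam - T) * \<bar>traj (xs 2) u i t - traj (xs 2) u j t\<bar>))"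
      using mp[OF spec[OF B, of 2] two] .
    have xa: "xs 2 0 = - 1/2" and xb: "xs 2 1 = 1/2" by (simp_all add: xs_def)
    from bwd_N2[OF assms(1) assms(2) le assms(3) xa xb] P2 show False by (rule notE)
  qed
qed

end
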